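(* For every set $M$ of $m$ items, every integer $n\ge 1$, and every normalized monotone valuation $v:2^M\to\mathbb{R}_{\ge 0}$, we have $\mathrm{RMMS}(M,v,n)\ \ge\ \mathrm{MXS}(M,v,n)$.
   Context: Items: a finite set $M=\{e_1,\dots,e_m\}$; there are $n$ agents. A valuation is a function $v:2^M\to\mathbb{R}$ that is normalized ($v(\emptyset)=0$) and monotone ($v(S)\le v(T)$ whenever $S\subseteq T\subseteq M$). For $S\subseteq M$ and $e\in S$, $S-e$ denotes $S\setminus\{e\}$. An allocation is a partition $A_1,\dots,A_n$ of $M$ (parts may be empty), with $A_i$ given to agent $a_i$. Residual maximin share: $\mathrm{RMMS}(M,v,n)$ is the largest real $t$ with the following property: for every $0\le k<n$ and every $k$ pairwise disjoint bundles $B_1,\dots,B_k\subseteq M$ with $v(B_j)<t$ for all $j$, the set $M\setminus(B_1\cup\dots\cup B_k)$ can be partitioned into $n-k$ bundles each of value (under $v$) at least $t$. MXS: for an agent $a_i$ with valuation $v_i$, $\mathrm{MXS}(M,v_i,n)$ is the minimum of $v_i(S)$ over all bundles $S\subseteq M$ for which there exists an allocation $A_1,\dots,A_n$ with $A_i=S$ such that for every $j$ and every $e\in A_j$, $v_i(S)\ge v_i(A_j-e)$ (i.e. $a_i$ has no EFX envy towards any agent). *)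

theory Defs
  imports Complex_Main
begin

definition valuation :: "'a set \<Rightarrow> ('a set \<Rightarrow> real) \<Rightarrow> bool" where
  "valuation M v \<longleftrightarrow> v {} = 0 \<and> (\<forall>S T. S \<subseteq> T \<and> T \<subseteq> M \<longrightarrow> v S \<le> v T)"

definition is_partition :: "'a set \<Rightarrow> nat \<Rightarrow> (nat \<Rightarrow> 'a set) \<Rightarrow> bool" where
  "is_partition X k P \<longleftrightarrow>
     (\<Union>j<k. P j) = X \<and> (\<forall>i<k. \<forall>j<k. i \<noteq> j \<longrightarrow> P i \<inter> P j = {})"

definition rmms_prop :: "'a set \<Rightarrow> ('a set \<Rightarrow> real) \<Rightarrow> nat \<Rightarrow> real \<Rightarrow> bool" where
  "rmms_prop M v n t \<longleftrightarrow>
     (\<forall>k<n. \<forall>B :: nat \<Rightarrow> 'a set.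
        (\<forall>j<k. B j \<subseteq> M \<and> v (B j) < t) \<and>
        (\<forall>i<k. \<forall>j<k. i \<noteq> j \<longrightarrow> B i \<inter> B j = {}) \<longrightarrow>
        (\<exists>P. is_partition (M - (\<Union>j<k. B j)) (n - k) P \<and> (\<forall>j<n - k. v (P j) \<ge> t)))"

definition RMMS :: "'a set \<Rightarrow> ('a set \<Rightarrow> real) \<Rightarrow> nat \<Rightarrow> real" where
  "RMMS M v n = (GREATEST t. rmms_prop M v n t)"

text \<open>Bundles S that some agent can receive in an allocation of M to n agents
  while having no EFX envy towards any agent.\<close>
definition mxs_bundles :: "'a set \<Rightarrow> ('a set \<Rightarrow> real) \<Rightarrow> nat \<Rightarrow> 'a set set" where
  "mxs_bundles M v n =
     {S. \<exists>A i. i < n \<and> is_partition M n A \<and> A i = S \<and>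
          (\<forall>j<n. \<forall>e\<in>A j. v S \<ge> v (A j - {e}))}"

definition MXS :: "'a set \<Rightarrow> ('a set \<Rightarrow> real) \<Rightarrow> nat \<Rightarrow> real" where
  "MXS M v n = Min (v ` mxs_bundles M v n)"

end

theory Submission
  imports Defs
begin

lemma val_mono: "valuation M v \<Longrightarrow> S \<subseteq> T \<Longrightarrow> T \<subseteq> M \<Longrightarrow> v S \<le> v T"
  by (simp add: valuation_def)

lemma part_sub: "is_partition X k P \<Longrightarrow> j < k \<Longrightarrow> P j \<subseteq> X"
  by (auto simp: is_partition_def)

lemma efx_partition:
  assumes "finite R" "R \<subseteq> M" "valuation M v" "m \<ge> 1"
  shows "\<exists>Y s. is_partition R m Y \<and> s < m \<and> (\<forall>j<m. v (Y s) \<le> v (Y j))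
            \<and> (\<forall>j<m. \<forall>e\<in>Y j. v (Y j - {e}) \<le> v (Y s))"
proof -
  define V where "V = v ` Pow R"
  have finV: "finite V" using assms(1) by (simp add: V_def)
  define mn where "mn = (\<lambda>Y::nat \<Rightarrow> 'a set. Min ((\<lambda>j. v (Y j)) ` {..<m}))"
  have mn_le: "mn Y \<le> v (Y j)" if "j < m" for Y j unfolding mn_def using that by (intro Min_le) auto
  have mn_ex: "\<exists>s<m. v (Y s) = mn Y" for Y
  proof -
    have "mn Y \<in> (\<lambda>j. v (Y j)) ` {..<m}" unfolding mn_def using assms(4) by (intro Min_in) (auto simp: lessThan_empty_iff)
    thus ?thesis by auto
  qed
  have mn_ge: "x \<le> mn Y" if "\<forall>j<m. x \<le> v (Y j)" for x Y
    unfolding mn_def using that assms(4) by (subst Min_ge_iff) (auto simp: lessThan_empty_iff)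
  have mnV: "mn Y \<in> V" if "is_partition R m Y" for Y
  proof -
    obtain s where "s < m" "v (Y s) = mn Y" using mn_ex by blast
    moreover have "Y s \<in> Pow R" using part_sub[OF that \<open>s<m\<close>] by auto
    ultimately show ?thesis unfolding V_def by (metis image_eqI)
  qed
  define W where "W = mn ` {Y. is_partition R m Y}"
  have Y0: "is_partition R m (\<lambda>j. if j = 0 then R else {})"
    using assms(4) by (auto simp: is_partition_def)
  have finW: "finite W" using mnV finV unfolding W_def
    by (metis (no_types, lifting) finite_subset image_subset_iff mem_Collect_eq)
  have neW: "W \<noteq> {}" using Y0 unfolding W_def by blast
  define mstar where "mstar = Max W"
  have mstar_max: "mn Y \<le> mstar" if "is_partition R m Y" for Y
    using that finW by (auto simp: mstar_def W_def intro!: Max_ge)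
  obtain Y1 where Y1: "is_partition R m Y1" "mn Y1 = mstar"
    using Max_in[OF finW neW] unfolding mstar_def W_def by auto
  define C where "C = card R + 1"
  define \<Phi> where "\<Phi> = (\<lambda>Y::nat \<Rightarrow> 'a set. \<Sum>i\<in>{i. i < m \<and> v (Y i) = mstar}. C - card (Y i))"
  define p where "p = (LEAST p. \<exists>Y. is_partition R m Y \<and> mn Y = mstar \<and> \<Phi> Y = p)"
  have "\<exists>Y. is_partition R m Y \<and> mn Y = mstar \<and> \<Phi> Y = p"
    unfolding p_def by (rule LeastI_ex) (use Y1 in blast)
  then obtain Y where Yp: "is_partition R m Y" and Ymn: "mn Y = mstar" and YP: "\<Phi> Y = p" by blast
  have pmin: "p \<le> \<Phi> Y'" if "is_partition R m Y'" "mn Y' = mstar" for Y'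
    unfolding p_def by (rule Least_le) (use that in blast)
  obtain s where s: "s < m" "v (Y s) = mstar" using mn_ex Ymn by blast
  have YsubR: "Y i \<subseteq> R" if "i<m" for i using part_sub[OF Yp that] .
  have D: "\<forall>a<m. \<forall>b<m. a \<noteq> b \<longrightarrow> Y a \<inter> Y b = {}" using Yp by (simp add: is_partition_def)
  have Dab: "Y a \<inter> Y b = {}" if "a < m" "b < m" "a \<noteq> b" for a b using D that by blast
  have U: "(\<Union>i<m. Y i) = R" using Yp by (simp add: is_partition_def)
  have efx: "\<forall>j<m. \<forall>e\<in>Y j. v (Y j - {e}) \<le> v (Y s)"
  proof (rule ccontr)
    assume "\<not> ?thesis"
    then obtain j e where j: "j < m" "e \<in> Y j" "v (Y j - {e}) > v (Y s)" by force
    have "j \<noteq> s"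
    proof
      assume "j = s"
      have "v (Y s - {e}) \<le> v (Y s)" using val_mono[OF assms(3), of "Y s - {e}" "Y s"] YsubR[OF s(1)] assms(2) by blast
      thus False using j \<open>j = s\<close> by simp
    qed
    have eNs: "e \<notin> Y s" using Dab[of s j] j \<open>j \<noteq> s\<close> s by auto
    define Y' where "Y' = Y(s := insert e (Y s), j := Y j - {e})"
    have Y's: "Y' s = insert e (Y s)" using \<open>j\<noteq>s\<close> by (simp add: Y'_def)
    have Y'j: "Y' j = Y j - {e}" by (simp add: Y'_def)
    have Y'o: "Y' i = Y i" if "i \<noteq> s" "i \<noteq> j" for i using that by (simp add: Y'_def)
    have Ysup: "Y i - {e} \<subseteq> Y' i" for i
      using Y's Y'j Y'o[of i] by (cases "i = s"; cases "i = j") auto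
    have Ysub: "Y' i \<subseteq> Y i \<union> {e}" for i
      using Y's Y'j Y'o[of i] \<open>j \<noteq> s\<close> by (cases "i = s"; cases "i = j") auto
    have eR: "e \<in> R" using YsubR[OF j(1)] j(2) by blast
    have part': "is_partition R m Y'"
      unfolding is_partition_def
    proof (intro conjI allI impI)
      show "(\<Union>i<m. Y' i) = R"
      proof
        show "(\<Union>i<m. Y' i) \<subseteq> R"
        proof (rule UN_least)
          fix i assume "i \<in> {..<m}"
          thus "Y' i \<subseteq> R" using YsubR[of i] Ysub[of i] eR by blast
        qed
        show "R \<subseteq> (\<Union>i<m. Y' i)"
        proof
          fix x assume "x \<in> R"
          then obtain i where i: "i < m" "x \<in> Y i" using U by auto
          show "x \<in> (\<Union>i<m. Y' i)"
          proof (cases "x = e")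
            case True thus ?thesis using Y's s by auto
          next
            case False
            hence "x \<in> Y' i" using i Ysup[of i] by blast
            thus ?thesis using i by auto
          qed
        qed
      qed
      fix a b assume ab: "a < m" "b < m" "a \<noteq> b"
      have sub: "Y' i \<subseteq> Y i" if "i \<noteq> s" for i using that Y'j Y'o[of i] by (cases "i = j") auto
      have eN: "e \<notin> Y' i" if "i \<noteq> s" "i < m" for i
      proof (cases "i = j")
        case True thus ?thesis using Y'j by simp
      next
        case False thus ?thesis using Dab[of i j] j that Y'o[of i] by auto
      qed
      show "Y' a \<inter> Y' b = {}"
      proof (cases "a = s")
        case True
        hence "b \<noteq> s" using ab by simp
        thus ?thesis using True Y's sub[of b] eN[of b] Dab[of s b] ab s by auto
      next
        case False
        show ?thesis
        proof (cases "b = s")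
          case True
          thus ?thesis using False Y's sub[of a] eN[of a] Dab[of a s] ab s by auto
        next
          case False2: False
          thus ?thesis using False sub[of a] sub[of b] Dab[of a b] ab by auto
        qed
      qed
    qed
    have ge: "mstar \<le> v (Y' i)" if "i < m" for i
    proof -
      consider "i = s" | "i = j" | "i \<noteq> s" "i \<noteq> j" by blast
      thus ?thesis
      proof cases
        case 1
        have "insert e (Y s) \<subseteq> R" using YsubR[OF j(1)] YsubR[OF s(1)] j(2) by blast
        hence "v (Y s) \<le> v (insert e (Y s))"
          using val_mono[OF assms(3), of "Y s" "insert e (Y s)"] assms(2) by blast
        thus ?thesis using 1 Y's s by simp
      next
        case 2 thus ?thesis using Y'j j s by simp
      next
        case 3 thus ?thesis using Y'o[of i] mn_le[OF that, of Y] Ymn by simp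
      qed
    qed
    have "mstar \<le> mn Y'" by (rule mn_ge) (use ge in blast)
    hence mn': "mn Y' = mstar" using mstar_max[OF part'] by linarith
    let ?I = "{i. i < m \<and> v (Y i) = mstar}"
    let ?I' = "{i. i < m \<and> v (Y' i) = mstar}"
    have finI: "finite ?I" "finite ?I'" by auto
    have sI: "s \<in> ?I" using s by auto
    have vj: "v (Y' j) \<noteq> mstar" using Y'j j(3) s(2) by simp
    have sub: "?I' - {s} \<subseteq> ?I - {s}"
    proof
      fix i assume i: "i \<in> ?I' - {s}"
      have "i \<noteq> j" using i vj by auto
      hence "Y' i = Y i" using i Y'o[of i] by blast
      thus "i \<in> ?I - {s}" using i by simp
    qed
    have eqS: "(\<Sum>i\<in>?I' - {s}. C - card (Y' i)) = (\<Sum>i\<in>?I' - {s}. C - card (Y i))"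
    proof (rule sum.cong)
      fix i assume i: "i \<in> ?I' - {s}"
      have "i \<noteq> j" using i vj by auto
      hence "Y' i = Y i" using i Y'o[of i] by blast
      thus "C - card (Y' i) = C - card (Y i)" by simp
    qed simp
    have le1: "(\<Sum>i\<in>?I' - {s}. C - card (Y i)) \<le> (\<Sum>i\<in>?I - {s}. C - card (Y i))"
      by (rule sum_mono2) (use sub in auto)
    have finYs: "finite (Y s)" using finite_subset[OF YsubR[OF s(1)] assms(1)] .
    have cardR: "card (insert e (Y s)) \<le> card R"
      using YsubR[OF s(1)] eR assms(1) by (intro card_mono) auto
    have cardins: "card (insert e (Y s)) = card (Y s) + 1" using finYs eNs by simp
    have PY: "\<Phi> Y = (C - card (Y s)) + (\<Sum>i\<in>?I - {s}. C - card (Y i))"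
      unfolding \<Phi>_def by (rule sum.remove[OF finI(1) sI])
    have "\<Phi> Y' < \<Phi> Y"
    proof (cases "s \<in> ?I'")
      case True
      have "\<Phi> Y' = (C - card (Y' s)) + (\<Sum>i\<in>?I' - {s}. C - card (Y' i))"
        unfolding \<Phi>_def by (rule sum.remove[OF finI(2) True])
      moreover have "C - card (Y' s) < C - card (Y s)" using Y's cardR cardins C_def by simp
      ultimately show ?thesis using PY eqS le1 by linarith
    next
      case False
      have "\<Phi> Y' = (\<Sum>i\<in>?I' - {s}. C - card (Y' i))"
        unfolding \<Phi>_def using False by (simp add: Diff_insert0)
      moreover have "0 < C - card (Y s)" using cardR cardins C_def by simp
      ultimately show ?thesis using PY eqS le1 by linarith
    qed
    thus False using pmin[OF part' mn'] YP by simp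
  qed
  have "\<forall>j<m. v (Y s) \<le> v (Y j)" using s mn_le[of _ Y] Ymn by auto
  thus ?thesis using Yp s efx by blast
qed

lemma Min_in_fin: "finite A \<Longrightarrow> A \<noteq> {} \<Longrightarrow> Min A \<in> A" by simp

theorem mainTheorem1:
  fixes M :: "'a set" and v :: "'a set \<Rightarrow> real" and n :: nat
  assumes "finite M" and "n \<ge> 1" and "valuation M v"
    and "\<forall>S\<subseteq>M. v S \<ge> 0"
  shows "RMMS M v n \<ge> MXS M v n"
proof -
  note mono = val_mono[OF assms(3)]
  define \<mu> where "\<mu> = MXS M v n"
  define A0 where "A0 = (\<lambda>j::nat. if j = 0 then M else {})"
  have A0p: "is_partition M n A0" using assms(2) by (auto simp: is_partition_def A0_def)
  have A0sub: "A0 j \<subseteq> M" for j by (simp add: A0_def)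
  have Mmxs: "M \<in> mxs_bundles M v n"
    unfolding mxs_bundles_def
  proof (intro CollectI exI conjI allI impI ballI)
    show "0 < n" using assms(2) by simp
    show "is_partition M n A0" by (rule A0p)
    show "A0 0 = M" by (simp add: A0_def)
    fix j e assume "j < n" "e \<in> A0 j"
    show "v (A0 j - {e}) \<le> v M" using mono[of "A0 j - {e}" M] A0sub[of j] by blast
  qed
  have mxs_sub: "S \<subseteq> M" if "S \<in> mxs_bundles M v n" for S
    using that part_sub unfolding mxs_bundles_def by blast
  have finmxs: "finite (mxs_bundles M v n)"
    by (rule finite_subset[of _ "Pow M"]) (use mxs_sub assms(1) in auto)
  have mu_le: "\<mu> \<le> v S" if "S \<in> mxs_bundles M v n" for S
    unfolding \<mu>_def MXS_def using finmxs that by (intro Min_le) auto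
  have muV: "\<mu> \<in> v ` Pow M"
  proof -
    have "\<mu> \<in> v ` mxs_bundles M v n" unfolding \<mu>_def MXS_def
      using finmxs Mmxs by (intro Min_in_fin) auto
    thus ?thesis using mxs_sub by blast
  qed
  have mu_le': "\<mu> \<le> v (A i)"
    if "is_partition M n A" "i < n" "\<forall>j<n. \<forall>e\<in>A j. v (A j - {e}) \<le> v (A i)" for A i
  proof -
    have "A i \<in> mxs_bundles M v n" unfolding mxs_bundles_def using that by blast
    thus ?thesis by (rule mu_le)
  qed
  have propmu: "rmms_prop M v n \<mu>"
    unfolding rmms_prop_def
  proof (intro allI impI)
    fix k B assume k: "k < n"
      and HB: "(\<forall>j<k. B j \<subseteq> M \<and> v (B j) < \<mu>) \<and> (\<forall>i<k. \<forall>j<k. i \<noteq> j \<longrightarrow> B i \<inter> B j = {})"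
    have Bsub: "B j \<subseteq> M" and Bv: "v (B j) < \<mu>" if "j < k" for j using HB that by auto
    have Bd: "B i \<inter> B j = {}" if "i < k" "j < k" "i \<noteq> j" for i j using HB that by auto
    define R where "R = M - (\<Union>j<k. B j)"
    have RM: "R \<subseteq> M" and finR: "finite R" using assms(1) by (auto simp: R_def)
    obtain Y s where Yp: "is_partition R (n-k) Y" and s: "s < n-k"
      and Ymin: "\<forall>j<n-k. v (Y s) \<le> v (Y j)" and Yefx: "\<forall>j<n-k. \<forall>e\<in>Y j. v (Y j - {e}) \<le> v (Y s)"
      using efx_partition[OF finR RM assms(3), of "n-k"] k by (metis Suc_leI zero_less_diff One_nat_def)
    have YR: "Y j \<subseteq> R" if "j < n-k" for j using part_sub[OF Yp that] .
    have YU: "(\<Union>j<n-k. Y j) = R" using Yp by (simp add: is_partition_def)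
    have Yd: "Y i \<inter> Y j = {}" if "i < n-k" "j < n-k" "i \<noteq> j" for i j
      using Yp that by (simp add: is_partition_def)
    define X where "X = (\<lambda>j. if j < k then B j else Y (j - k))"
    have Xpart: "is_partition M n X"
      unfolding is_partition_def
    proof (intro conjI allI impI)
      show "(\<Union>j<n. X j) = M"
      proof
        show "(\<Union>j<n. X j) \<subseteq> M"
        proof (rule UN_least)
          fix j assume "j \<in> {..<n}"
          thus "X j \<subseteq> M" using Bsub[of j] YR[of "j-k"] RM unfolding X_def by (cases "j < k") (auto simp: less_diff_conv2)
        qed
        show "M \<subseteq> (\<Union>j<n. X j)"
        proof
          fix x assume xM: "x \<in> M"
          show "x \<in> (\<Union>j<n. X j)"
          proof (cases "x \<in> (\<Union>j<k. B j)")
            case True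
            then obtain j where "j < k" "x \<in> B j" by auto
            thus ?thesis using k unfolding X_def by (intro UN_I[of j]) auto
          next
            case False
            hence "x \<in> R" using xM by (simp add: R_def)
            then obtain j where j: "j < n-k" "x \<in> Y j" using YU by auto
            have "X (j + k) = Y j" by (simp add: X_def)
            thus ?thesis using j by (intro UN_I[of "j+k"]) auto
          qed
        qed
      qed
      fix a b assume ab: "a < n" "b < n" "a \<noteq> b"
      have BY: "B i \<inter> Y j = {}" if "i < k" "j < n-k" for i j
        using YR[OF that(2)] that(1) unfolding R_def by blast
      show "X a \<inter> X b = {}"
      proof (cases "a < k")
        case True
        show ?thesis
        proof (cases "b < k")
          case True2: True
          thus ?thesis using True Bd[of a b] ab unfolding X_def by simp
        next
          case False
          thus ?thesis using True BY[of a "b-k"] ab unfolding X_def by simp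
        qed
      next
        case False
        show ?thesis
        proof (cases "b < k")
          case True
          moreover have "a - k < n - k" using False ab by simp
          ultimately show ?thesis using False BY[of b "a-k"] ab unfolding X_def by auto
        next
          case False2: False
          thus ?thesis using False Yd[of "a-k" "b-k"] ab unfolding X_def by simp
        qed
      qed
    qed
    have BlY: "v (B i) < v (Y s)" if i: "i < k" for i
    proof -
      define bm where "bm = Max ((\<lambda>j. v (B j)) ` {..<k})"
      have fin: "finite ((\<lambda>j. v (B j)) ` {..<k})" by simp
      have ne: "(\<lambda>j. v (B j)) ` {..<k} \<noteq> {}" using i by auto
      obtain i1 where i1: "i1 < k" "v (B i1) = bm"
        using Max_in[OF fin ne] unfolding bm_def by auto
      have bmge: "v (B i') \<le> bm" if "i' < k" for i'
        unfolding bm_def using fin that by (intro Max_ge) auto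
      have "\<not> (\<forall>j<n. \<forall>e\<in>X j. v (X j - {e}) \<le> v (X i1))"
      proof
        assume "\<forall>j<n. \<forall>e\<in>X j. v (X j - {e}) \<le> v (X i1)"
        hence "\<mu> \<le> v (X i1)" using mu_le'[OF Xpart, of i1] i1 k by auto
        thus False using Bv[OF i1(1)] i1 unfolding X_def by simp
      qed
      then obtain j e where j: "j < n" "e \<in> X j" "v (X j - {e}) > v (X i1)" by force
      have XB: "X i1 = B i1" using i1 by (simp add: X_def)
      have "\<not> j < k"
      proof
        assume jk: "j < k"
        have "v (B j - {e}) \<le> v (B j)" using mono[of "B j - {e}" "B j"] Bsub[OF jk] by blast
        thus False using j XB bmge[OF jk] i1 jk unfolding X_def by simp
      qed
      hence XY: "X j = Y (j - k)" "j - k < n - k" using j by (auto simp: X_def)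
      have "v (Y (j-k) - {e}) \<le> v (Y s)" using Yefx XY j by blast
      thus ?thesis using j XY XB i1 bmge[OF i] by simp
    qed
    have "\<mu> \<le> v (X (k + s))"
    proof (rule mu_le'[OF Xpart])
      show "k + s < n" using s by simp
      show "\<forall>j<n. \<forall>e\<in>X j. v (X j - {e}) \<le> v (X (k + s))"
      proof (intro allI impI ballI)
        fix j e assume j: "j < n" "e \<in> X j"
        have Xks: "X (k + s) = Y s" by (simp add: X_def)
        show "v (X j - {e}) \<le> v (X (k + s))"
        proof (cases "j < k")
          case True
          have "v (B j - {e}) \<le> v (B j)" using mono[of "B j - {e}" "B j"] Bsub[OF True] by blast
          thus ?thesis using BlY[OF True] True Xks unfolding X_def by simp
        next
          case False
          hence "X j = Y (j - k)" "j - k < n - k" using j by (auto simp: X_def)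
          thus ?thesis using Yefx Xks j by auto
        qed
      qed
    qed
    hence muYs: "\<mu> \<le> v (Y s)" by (simp add: X_def)
    show "\<exists>P. is_partition (M - (\<Union>j<k. B j)) (n - k) P \<and> (\<forall>j<n - k. \<mu> \<le> v (P j))"
      using Yp Ymin muYs unfolding R_def by force
  qed
  define V where "V = v ` Pow M"
  define T where "T = {x \<in> V. rmms_prop M v n x}"
  have finV: "finite V" using assms(1) by (simp add: V_def)
  have finT: "finite T" using finV by (simp add: T_def)
  have muT: "\<mu> \<in> T" using muV propmu by (simp add: T_def V_def)
  define tstar where "tstar = Max T"
  have tstarT: "tstar \<in> T" unfolding tstar_def using finT muT by (intro Max_in) auto
  have upper: "t \<le> tstar" if pt: "rmms_prop M v n t" for t
  proof -
    have tM: "t \<le> v M"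
    proof -
      have n0: "0 < n" using assms(2) by simp
      have "\<exists>P. is_partition M n P \<and> (\<forall>j<n. t \<le> v (P j))"
        using pt[unfolded rmms_prop_def, rule_format, OF n0, of "\<lambda>_. {}"] by simp
      then obtain P where P: "is_partition M n P" "\<forall>j<n. t \<le> v (P j)" by auto
      have "v (P 0) \<le> v M" using mono[of "P 0" M] part_sub[OF P(1), of 0] assms(2) by auto
      thus ?thesis using P(2) assms(2) by force
    qed
    define U where "U = {x \<in> V. t \<le> x}"
    have finU: "finite U" using finV by (simp add: U_def)
    have MV: "v M \<in> V" by (simp add: V_def)
    have neU: "U \<noteq> {}" using MV tM by (auto simp: U_def)
    define y where "y = Min U"
    have yU: "y \<in> U" unfolding y_def using finU neU by (rule Min_in_fin)
    have yle: "y \<le> x" if "x \<in> U" for x unfolding y_def using finU that by (rule Min_le)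
    have py: "rmms_prop M v n y"
      unfolding rmms_prop_def
    proof (intro allI impI)
      fix k B assume k: "k < n"
        and HB: "(\<forall>j<k. B j \<subseteq> M \<and> v (B j) < y) \<and> (\<forall>i<k. \<forall>j<k. i \<noteq> j \<longrightarrow> B i \<inter> B j = {})"
      have "\<forall>j<k. B j \<subseteq> M \<and> v (B j) < t"
      proof (intro allI impI)
        fix j assume "j < k"
        hence Bj: "B j \<subseteq> M" "v (B j) < y" using HB by auto
        have "\<not> t \<le> v (B j)"
        proof
          assume "t \<le> v (B j)"
          hence "v (B j) \<in> U" using Bj by (auto simp: U_def V_def)
          thus False using yle Bj by force
        qed
        thus "B j \<subseteq> M \<and> v (B j) < t" using Bj by simp
      qed
      hence "\<exists>P. is_partition (M - (\<Union>j<k. B j)) (n - k) P \<and> (\<forall>j<n - k. t \<le> v (P j))"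
        using pt k HB unfolding rmms_prop_def by blast
      then obtain P where P: "is_partition (M - (\<Union>j<k. B j)) (n - k) P" "\<forall>j<n - k. t \<le> v (P j)"
        by blast
      have "\<forall>j<n - k. y \<le> v (P j)"
      proof (intro allI impI)
        fix j assume j: "j < n - k"
        have "P j \<subseteq> M" using part_sub[OF P(1) j] by blast
        hence "v (P j) \<in> U" using P(2) j by (auto simp: U_def V_def)
        thus "y \<le> v (P j)" by (rule yle)
      qed
      thus "\<exists>P. is_partition (M - (\<Union>j<k. B j)) (n - k) P \<and> (\<forall>j<n - k. y \<le> v (P j))"
        using P(1) by blast
    qed
    have "y \<in> T" using yU py by (simp add: T_def U_def)
    hence "y \<le> tstar" unfolding tstar_def using finT by (rule Max_ge[rotated])
    thus ?thesis using yU by (simp add: U_def)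
  qed
  have "RMMS M v n = tstar" unfolding RMMS_def
    by (rule Greatest_equality) (use tstarT upper in \<open>auto simp: T_def\<close>)
  moreover have "\<mu> \<le> tstar" unfolding tstar_def using finT muT by (rule Max_ge)
  ultimately show ?thesis by (simp add: \<mu>_def)
qed

end
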